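(* Let $G=(V_G,E_G)$ and $H=(V_H,E_H)$ be two vertex-disjoint directed co-graphs. Then $\mathrm{pw}(\mathrm{un}(G\oslash H))>\mathrm{dpw}(G\oslash H)$.
   Context: Digraphs are finite, without loops or multiple arcs. Operations on vertex-disjoint digraphs $G_1,\ldots,G_k$: disjoint union $\oplus$ (union of vertex and arc sets); series composition $\otimes$ (disjoint union plus all arcs in both directions between vertices of different $G_i$); order composition $G_1\oslash\cdots\oslash G_k$ (disjoint union plus all arcs from vertices of $G_i$ to vertices of $G_j$ for $i<j$). Directed co-graphs: every single-vertex digraph, and closure under these three operations. $\mathrm{un}(G)$ is the underlying undirected graph of $G$ (edge $\{u,v\}$ iff $(u,v)$ or $(v,u)$ is an arc), and $\mathrm{pw}$ denotes the usual (undirected) path-width. A directed path-decomposition of $G=(V,E)$ is a sequence $(X_1,\ldots,X_r)$ of subsets of $V$ with $\bigcup X_i=V$, for each arc $(u,v)$ some $i\le j$ with $u\in X_i,v\in X_j$, and for each vertex the bags containing it having consecutive indices; width $\max|X_i|-1$; $\mathrm{dpw}(G)$ is the minimum width. *)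

theory Defs
  imports Main
begin

type_synonym 'a digraph = "'a set \<times> ('a \<times> 'a) set"

definition verts :: "'a digraph \<Rightarrow> 'a set" where "verts G = fst G"
definition arcs :: "'a digraph \<Rightarrow> ('a \<times> 'a) set" where "arcs G = snd G"

definition disj_union :: "'a digraph \<Rightarrow> 'a digraph \<Rightarrow> 'a digraph" where
  "disj_union G1 G2 = (verts G1 \<union> verts G2, arcs G1 \<union> arcs G2)"

definition series_comp :: "'a digraph \<Rightarrow> 'a digraph \<Rightarrow> 'a digraph" where
  "series_comp G1 G2 = (verts G1 \<union> verts G2,
     arcs G1 \<union> arcs G2 \<union> (verts G1 \<times> verts G2) \<union> (verts G2 \<times> verts G1))"

definition order_comp :: "'a digraph \<Rightarrow> 'a digraph \<Rightarrow> 'a digraph" where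
  "order_comp G1 G2 = (verts G1 \<union> verts G2,
     arcs G1 \<union> arcs G2 \<union> (verts G1 \<times> verts G2))"

inductive dcograph :: "'a digraph \<Rightarrow> bool" where
  single: "dcograph ({v}, {})"
| dunion: "\<lbrakk>dcograph G1; dcograph G2; verts G1 \<inter> verts G2 = {}\<rbrakk>
            \<Longrightarrow> dcograph (disj_union G1 G2)"
| series: "\<lbrakk>dcograph G1; dcograph G2; verts G1 \<inter> verts G2 = {}\<rbrakk>
            \<Longrightarrow> dcograph (series_comp G1 G2)"
| order: "\<lbrakk>dcograph G1; dcograph G2; verts G1 \<inter> verts G2 = {}\<rbrakk>
            \<Longrightarrow> dcograph (order_comp G1 G2)"

type_synonym 'a ugraph = "'a set \<times> 'a set set"

definition un :: "'a digraph \<Rightarrow> 'a ugraph" where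
  "un G = (verts G, {{u, v} | u v. (u, v) \<in> arcs G \<or> (v, u) \<in> arcs G})"

definition bags_ok :: "'a set \<Rightarrow> 'a set list \<Rightarrow> bool" where
  "bags_ok V Xs \<longleftrightarrow> Xs \<noteq> [] \<and> (\<forall>X\<in>set Xs. X \<subseteq> V) \<and> \<Union>(set Xs) = V \<and>
     (\<forall>v i j k. i \<le> j \<and> j \<le> k \<and> k < length Xs \<and> v \<in> Xs ! i \<and> v \<in> Xs ! k
        \<longrightarrow> v \<in> Xs ! j)"

definition bags_width :: "'a set list \<Rightarrow> nat" where
  "bags_width Xs = Max (card ` set Xs) - 1"

definition is_path_decomp :: "'a ugraph \<Rightarrow> 'a set list \<Rightarrow> bool" where
  "is_path_decomp G Xs \<longleftrightarrow> bags_ok (fst G) Xs \<and>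
     (\<forall>e\<in>snd G. \<exists>i<length Xs. e \<subseteq> Xs ! i)"

definition pw :: "'a ugraph \<Rightarrow> nat" where
  "pw G = (LEAST w. \<exists>Xs. is_path_decomp G Xs \<and> bags_width Xs = w)"

definition is_dir_path_decomp :: "'a digraph \<Rightarrow> 'a set list \<Rightarrow> bool" where
  "is_dir_path_decomp G Xs \<longleftrightarrow> bags_ok (verts G) Xs \<and>
     (\<forall>(u, v)\<in>arcs G. \<exists>i j. i \<le> j \<and> j < length Xs \<and> u \<in> Xs ! i \<and> v \<in> Xs ! j)"

definition dpw :: "'a digraph \<Rightarrow> nat" where
  "dpw G = (LEAST w. \<exists>Xs. is_dir_path_decomp G Xs \<and> bags_width Xs = w)"

end

theory Submission
  imports Defs
begin

lemma dco_props:
  "dcograph G \<Longrightarrow> finite (verts G) \<and> verts G \<noteq> {} \<and> arcs G \<subseteq> verts G \<times> verts G"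
  by (induction rule: dcograph.induct)
     (auto simp: verts_def arcs_def disj_union_def series_comp_def order_comp_def)

definition conv :: "'a set list \<Rightarrow> bool" where
  "conv Xs \<longleftrightarrow> (\<forall>v i j k. i \<le> j \<and> j \<le> k \<and> k < length Xs \<and> v \<in> Xs ! i \<and> v \<in> Xs ! k
        \<longrightarrow> v \<in> Xs ! j)"

lemma conv_between:
  assumes "conv Xs" "min i k \<le> j" "j \<le> max i k" "i < length Xs" "k < length Xs"
    "v \<in> Xs ! i" "v \<in> Xs ! k"
  shows "v \<in> Xs ! j"
proof (cases "i \<le> k")
  case True
  then have "i \<le> j" "j \<le> k" using assms(2,3) by (simp_all add: min_def max_def)
  then show ?thesis using assms(1,5,6,7) unfolding conv_def by blast
next
  case False
  then have "k \<le> j" "j \<le> i" using assms(2,3) by (simp_all add: min_def max_def)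
  then show ?thesis using assms(1,4,6,7) unfolding conv_def by blast
qed

lemma helly3:
  assumes c: "conv Xs" and "a < length Xs" "b < length Xs" "c < length Xs"
    "u \<in> Xs ! a" "v \<in> Xs ! a" "v \<in> Xs ! b" "w \<in> Xs ! b" "u \<in> Xs ! c" "w \<in> Xs ! c"
  shows "\<exists>m < length Xs. u \<in> Xs ! m \<and> v \<in> Xs ! m \<and> w \<in> Xs ! m"
proof -
  define m where "m = max (min a b) (min (max a b) c)"
  have m1: "min a c \<le> m" "m \<le> max a c" "min a b \<le> m" "m \<le> max a b"
    "min b c \<le> m" "m \<le> max b c"
    unfolding m_def by (simp_all add: min_def max_def)
  have "m < length Xs" using assms(2,3,4) unfolding m_def by (simp add: min_def max_def)
  moreover have "u \<in> Xs ! m"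
    using conv_between[OF c m1(1,2)] assms by blast
  moreover have "v \<in> Xs ! m"
    using conv_between[OF c m1(3,4)] assms by blast
  moreover have "w \<in> Xs ! m"
    using conv_between[OF c m1(5,6)] assms by blast
  ultimately show ?thesis by blast
qed

lemma conv_append:
  assumes c1: "conv L1" and c2: "conv L2" and d: "\<Union>(set L1) \<inter> \<Union>(set L2) = {}"
  shows "conv (L1 @ L2)"
  unfolding conv_def
proof (intro allI impI)
  fix v i j k
  assume h: "i \<le> j \<and> j \<le> k \<and> k < length (L1 @ L2) \<and> v \<in> (L1 @ L2) ! i \<and> v \<in> (L1 @ L2) ! k"
  have ij: "i \<le> j" and jk: "j \<le> k" and kl: "k < length L1 + length L2"
    and vi: "v \<in> (L1 @ L2) ! i" and vk: "v \<in> (L1 @ L2) ! k" using h by simp_all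
  show "v \<in> (L1 @ L2) ! j"
  proof (cases "k < length L1")
    case True
    have "j < length L1" "i < length L1" using True ij jk by simp_all
    then have "v \<in> L1 ! i" "v \<in> L1 ! k" "(L1 @ L2) ! j = L1 ! j"
      using vi vk True by (simp_all add: nth_append)
    then show ?thesis using c1 ij jk True unfolding conv_def by metis
  next
    case False
    have vk2: "v \<in> L2 ! (k - length L1)" using False vk by (simp add: nth_append)
    have kl2: "k - length L1 < length L2" using False kl by simp
    show ?thesis
    proof (cases "i < length L1")
      case True
      have "v \<in> L1 ! i" using True vi by (simp add: nth_append)
      then have "v \<in> \<Union>(set L1)" using True nth_mem by blast
      moreover have "v \<in> \<Union>(set L2)" using vk2 kl2 nth_mem by blast
      ultimately show ?thesis using d by blast
    next
      case False2: False
      have vi2: "v \<in> L2 ! (i - length L1)" using False2 vi by (simp add: nth_append)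
      have "i - length L1 \<le> j - length L1" "j - length L1 \<le> k - length L1"
        using ij jk by simp_all
      then have "v \<in> L2 ! (j - length L1)"
        using c2 vi2 vk2 kl2 unfolding conv_def by blast
      moreover have "\<not> j < length L1" using False2 ij by simp
      ultimately show ?thesis by (simp add: nth_append)
    qed
  qed
qed

lemma conv_sub:
  assumes c: "conv Xs" and so: "sorted idx" and lt: "\<forall>i\<in>set idx. i < length Xs"
  shows "conv (map (\<lambda>i. Xs ! i \<inter> A) idx)"
  unfolding conv_def
proof (intro allI impI)
  fix v i j k
  assume h: "i \<le> j \<and> j \<le> k \<and> k < length (map (\<lambda>i. Xs ! i \<inter> A) idx) \<and>
    v \<in> map (\<lambda>i. Xs ! i \<inter> A) idx ! i \<and> v \<in> map (\<lambda>i. Xs ! i \<inter> A) idx ! k"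
  have ij: "i \<le> j" and jk: "j \<le> k" and kl: "k < length idx" using h by simp_all
  have jl: "j < length idx" "i < length idx" using ij jk kl by simp_all
  have vi: "v \<in> Xs ! (idx ! i)" "v \<in> A" using h jl by simp_all
  have vk: "v \<in> Xs ! (idx ! k)" using h kl by simp
  have m1: "idx ! i \<le> idx ! j" using sorted_nth_mono[OF so ij jl(1)] .
  have m2: "idx ! j \<le> idx ! k" using sorted_nth_mono[OF so jk kl] .
  have "idx ! k < length Xs" using lt kl nth_mem by blast
  then have "v \<in> Xs ! (idx ! j)" using c m1 m2 vi vk unfolding conv_def by blast
  then show "v \<in> map (\<lambda>i. Xs ! i \<inter> A) idx ! j" using jl vi by simp
qed

lemma main_constr:
  fixes G H :: "'a digraph"
  assumes dG: "dcograph G" and dH: "dcograph H" and disj: "verts G \<inter> verts H = {}"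
    and P: "is_path_decomp (un (order_comp G H)) Xs"
  shows "\<exists>ys. is_dir_path_decomp (order_comp G H) ys \<and> bags_width ys < bags_width Xs"
proof -
  define A where "A = verts G"
  define B where "B = verts H"
  define n where "n = length Xs"
  have fA: "finite A" "A \<noteq> {}" "arcs G \<subseteq> A \<times> A" using dco_props[OF dG] A_def by auto
  have fB: "finite B" "B \<noteq> {}" "arcs H \<subseteq> B \<times> B" using dco_props[OF dH] B_def by auto
  have AB: "A \<inter> B = {}" using disj A_def B_def by auto
  have vD: "verts (order_comp G H) = A \<union> B"
    by (simp add: verts_def order_comp_def A_def B_def)
  have aD: "arcs (order_comp G H) = arcs G \<union> arcs H \<union> A \<times> B"
    by (simp add: arcs_def order_comp_def A_def B_def verts_def)
  have ok: "bags_ok (A \<union> B) Xs" using P vD by (simp add: is_path_decomp_def un_def)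
  have cX: "conv Xs" using ok unfolding bags_ok_def conv_def by (elim conjE) assumption
  have sub: "\<forall>X\<in>set Xs. X \<subseteq> A \<union> B" using ok by (simp add: bags_ok_def)
  have ne: "Xs \<noteq> []" using ok by (simp add: bags_ok_def)
  have edge: "\<exists>i<n. u \<in> Xs ! i \<and> v \<in> Xs ! i" if "(u, v) \<in> arcs (order_comp G H)" for u v
  proof -
    have "{u, v} \<in> snd (un (order_comp G H))" using that by (auto simp: un_def)
    then obtain i where "i < n" "{u, v} \<subseteq> Xs ! i" using P n_def
      by (auto simp: is_path_decomp_def)
    then show ?thesis by auto
  qed
  have eAB: "\<exists>i<n. a \<in> Xs ! i \<and> b \<in> Xs ! i" if "a \<in> A" "b \<in> B" for a b
    using edge[of a b] that aD by auto
  have finX: "finite (Xs ! i)" if "i < n" for i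
    using sub that n_def fA fB by (meson finite_UnI nth_mem rev_finite_subset)
  define M where "M = Max (card ` set Xs)"
  have cardM: "card (Xs ! i) \<le> M" if "i < n" for i
    using that n_def M_def by (simp add: Max_ge)
  obtain a0 where a0: "a0 \<in> A" using fA by auto
  obtain b0 where b0: "b0 \<in> B" using fB by auto
  obtain i0 where i0: "i0 < n" "a0 \<in> Xs ! i0" "b0 \<in> Xs ! i0" using eAB a0 b0 by blast
  have "a0 \<noteq> b0" using a0 b0 AB by auto
  then have "card {a0, b0} \<le> card (Xs ! i0)" using i0 finX[OF i0(1)]
    by (intro card_mono) auto
  then have M2: "M \<ge> 2" using cardM[OF i0(1)] \<open>a0 \<noteq> b0\<close> by auto
  define idxG where "idxG = filter (\<lambda>i. Xs ! i \<inter> B \<noteq> {}) [0..<n]"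
  define idxH where "idxH = filter (\<lambda>i. Xs ! i \<inter> A \<noteq> {}) [0..<n]"
  define L1 where "L1 = map (\<lambda>i. Xs ! i \<inter> A) idxG"
  define L2 where "L2 = map (\<lambda>i. Xs ! i \<inter> B) idxH"
  define ys where "ys = L1 @ L2"
  have inG: "Xs ! i \<inter> A \<in> set L1" if "i < n" "Xs ! i \<inter> B \<noteq> {}" for i
    using that by (auto simp: L1_def idxG_def)
  have inH: "Xs ! i \<inter> B \<in> set L2" if "i < n" "Xs ! i \<inter> A \<noteq> {}" for i
    using that by (auto simp: L2_def idxH_def)
  have card_lt: "card Y \<le> M - 1" if "i < n" "Y = Xs ! i \<inter> C" "Xs ! i - C \<noteq> {}" for Y i C
  proof -
    have "Y \<subset> Xs ! i" using that by blast
    then have "card Y < card (Xs ! i)" using finX[OF that(1)] by (simp add: psubset_card_mono)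
    then show ?thesis using cardM[OF that(1)] by linarith
  qed
  have card_ys: "card Y \<le> M - 1" if "Y \<in> set ys" for Y
  proof -
    have "Y \<in> set L1 \<or> Y \<in> set L2" using that ys_def by simp
    then show ?thesis
    proof
      assume "Y \<in> set L1"
      then obtain i where i: "i \<in> set idxG" "Y = Xs ! i \<inter> A" unfolding L1_def by auto
      have "i < n" "Xs ! i \<inter> B \<noteq> {}" using i(1) unfolding idxG_def by simp_all
      then have "Xs ! i - A \<noteq> {}" using AB by blast
      then show ?thesis using card_lt[OF \<open>i < n\<close> i(2)] by simp
    next
      assume "Y \<in> set L2"
      then obtain i where i: "i \<in> set idxH" "Y = Xs ! i \<inter> B" unfolding L2_def by auto
      have "i < n" "Xs ! i \<inter> A \<noteq> {}" using i(1) unfolding idxH_def by simp_all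
      then have "Xs ! i - B \<noteq> {}" using AB by blast
      then show ?thesis using card_lt[OF \<open>i < n\<close> i(2)] by simp
    qed
  qed
  have "Xs ! i0 \<inter> A \<in> set L1" using inG i0 b0 by blast
  then have ys_ne: "ys \<noteq> []" by (auto simp: ys_def)
  have "Max (card ` set ys) \<le> M - 1"
    using ys_ne card_ys by (simp add: Max_le_iff)
  then have w: "bags_width ys < bags_width Xs"
    using M2 by (simp add: bags_width_def M_def[symmetric])
  have cL1: "conv L1" unfolding L1_def
    by (rule conv_sub[OF cX]) (simp_all add: idxG_def n_def sorted_wrt_filter)
  have cL2: "conv L2" unfolding L2_def
    by (rule conv_sub[OF cX]) (simp_all add: idxH_def n_def sorted_wrt_filter)
  have U1: "\<Union>(set L1) \<subseteq> A" by (auto simp: L1_def)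
  have U2: "\<Union>(set L2) \<subseteq> B" by (auto simp: L2_def)
  have cys: "conv ys" unfolding ys_def
    by (rule conv_append[OF cL1 cL2]) (use U1 U2 AB in blast)
  have coverA: "\<exists>Y\<in>set L1. a \<in> Y" if hyp: "a \<in> A" for a
  proof -
    obtain i where "i < n" "a \<in> Xs ! i" "b0 \<in> Xs ! i" using eAB hyp b0 by blast
    then show ?thesis using inG[of i] that b0 by blast
  qed
  have coverB: "\<exists>Y\<in>set L2. b \<in> Y" if hyp: "b \<in> B" for b
  proof -
    obtain i where "i < n" "a0 \<in> Xs ! i" "b \<in> Xs ! i" using eAB hyp a0 by blast
    then show ?thesis using inH[of i] that a0 by blast
  qed
  have Uys: "\<Union>(set ys) = A \<union> B"
    using U1 U2 coverA coverB unfolding ys_def by auto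
  have same: "\<exists>i j. i \<le> j \<and> j < length ys \<and> u \<in> ys ! i \<and> v \<in> ys ! j"
    if hyp: "Y \<in> set ys" "u \<in> Y" "v \<in> Y" for Y u v
  proof -
    obtain p where "p < length ys" "ys ! p = Y" using hyp by (auto simp: in_set_conv_nth)
    then show ?thesis using that by blast
  qed
  have arcG: "\<exists>i j. i \<le> j \<and> j < length ys \<and> u \<in> ys ! i \<and> v \<in> ys ! j"
    if hyp: "(u, v) \<in> arcs G" for u v
  proof -
    have uv: "u \<in> A" "v \<in> A" using that fA by auto
    obtain a where a: "a < n" "u \<in> Xs ! a" "v \<in> Xs ! a" using edge[of u v] hyp aD by auto
    obtain b where b: "b < n" "v \<in> Xs ! b" "b0 \<in> Xs ! b" using eAB uv b0 by blast
    obtain c where c: "c < n" "u \<in> Xs ! c" "b0 \<in> Xs ! c" using eAB uv b0 by blast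
    obtain m where m: "m < n" "u \<in> Xs ! m" "v \<in> Xs ! m" "b0 \<in> Xs ! m"
      using helly3[OF cX, of a b c u v b0] a b c n_def by auto
    have "Xs ! m \<inter> A \<in> set ys" using inG[of m] m b0 ys_def by auto
    then show ?thesis using same m uv by blast
  qed
  have arcH: "\<exists>i j. i \<le> j \<and> j < length ys \<and> u \<in> ys ! i \<and> v \<in> ys ! j"
    if hyp: "(u, v) \<in> arcs H" for u v
  proof -
    have uv: "u \<in> B" "v \<in> B" using that fB by auto
    obtain a where a: "a < n" "u \<in> Xs ! a" "v \<in> Xs ! a" using edge[of u v] hyp aD by auto
    obtain b where b: "b < n" "v \<in> Xs ! b" "a0 \<in> Xs ! b" using eAB uv a0 by blast
    obtain c where c: "c < n" "u \<in> Xs ! c" "a0 \<in> Xs ! c" using eAB uv a0 by blast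
    obtain m where m: "m < n" "u \<in> Xs ! m" "v \<in> Xs ! m" "a0 \<in> Xs ! m"
      using helly3[OF cX, of a b c u v a0] a b c n_def by auto
    have "Xs ! m \<inter> B \<in> set ys" using inH[of m] m a0 ys_def by auto
    then show ?thesis using same m uv by blast
  qed
  have arcAB: "\<exists>i j. i \<le> j \<and> j < length ys \<and> u \<in> ys ! i \<and> v \<in> ys ! j"
    if hyp: "u \<in> A" "v \<in> B" for u v
  proof -
    obtain Y where Y: "Y \<in> set L1" "u \<in> Y" using coverA hyp by blast
    obtain Z where Z: "Z \<in> set L2" "v \<in> Z" using coverB hyp by blast
    obtain p where p: "p < length L1" "L1 ! p = Y" using Y by (auto simp: in_set_conv_nth)
    obtain q where q: "q < length L2" "L2 ! q = Z" using Z by (auto simp: in_set_conv_nth)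
    have "ys ! p = Y" using p by (simp add: ys_def nth_append)
    moreover have "ys ! (length L1 + q) = Z" using q by (simp add: ys_def nth_append)
    moreover have "length L1 + q < length ys" using q by (simp add: ys_def)
    moreover have "p \<le> length L1 + q" using p by simp
    ultimately show ?thesis using Y Z by blast
  qed
  have "is_dir_path_decomp (order_comp G H) ys"
    unfolding is_dir_path_decomp_def bags_ok_def vD
  proof (intro conjI)
    show "ys \<noteq> []" by fact
    show "\<forall>X\<in>set ys. X \<subseteq> A \<union> B" using Uys by blast
    show "\<Union>(set ys) = A \<union> B" by fact
    show "\<forall>v i j k. i \<le> j \<and> j \<le> k \<and> k < length ys \<and> v \<in> ys ! i \<and> v \<in> ys ! k \<longrightarrow> v \<in> ys ! j"
      using cys unfolding conv_def .
    show "\<forall>(u, v)\<in>arcs (order_comp G H). \<exists>i j. i \<le> j \<and> j < length ys \<and> u \<in> ys ! i \<and> v \<in> ys ! j"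
    proof (intro ballI, clarify)
      fix u v assume "(u, v) \<in> arcs (order_comp G H)"
      then have "(u, v) \<in> arcs G \<or> (u, v) \<in> arcs H \<or> (u \<in> A \<and> v \<in> B)" using aD by blast
      then show "\<exists>i j. i \<le> j \<and> j < length ys \<and> u \<in> ys ! i \<and> v \<in> ys ! j"
        using arcG arcH arcAB by blast
    qed
  qed
  then show ?thesis using w by blast
qed

theorem lemma3p9:
  fixes G H :: "'a digraph"
  assumes "dcograph G" and "dcograph H" and "verts G \<inter> verts H = {}"
  shows "pw (un (order_comp G H)) > dpw (order_comp G H)"
proof -
  let ?D = "order_comp G H"
  let ?V = "verts ?D"
  have fin: "finite (verts G)" "finite (verts H)" "arcs G \<subseteq> verts G \<times> verts G"
     "arcs H \<subseteq> verts H \<times> verts H"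
    using dco_props[OF assms(1)] dco_props[OF assms(2)] by auto
  have "is_path_decomp (un ?D) [?V]"
    using fin by (auto simp: is_path_decomp_def bags_ok_def un_def verts_def arcs_def order_comp_def)
  then have "\<exists>w Xs. is_path_decomp (un ?D) Xs \<and> bags_width Xs = w" by blast
  then have "\<exists>Xs. is_path_decomp (un ?D) Xs \<and> bags_width Xs = pw (un ?D)"
    unfolding pw_def by (rule LeastI_ex)
  then obtain Xs where Xs: "is_path_decomp (un ?D) Xs" "bags_width Xs = pw (un ?D)" by blast
  obtain ys where ys: "is_dir_path_decomp ?D ys" "bags_width ys < bags_width Xs"
    using main_constr[OF assms Xs(1)] by blast
  have "dpw ?D \<le> bags_width ys" unfolding dpw_def
    by (rule Least_le) (use ys in blast)
  then show ?thesis using ys Xs by simp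
qed

end
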